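(* Let $r\ge 4$ and let $w:E(K_r)\to\mathbb{R}_{>0}$ be a positive edge-weighting of the complete graph $K_r$. For each edge $e$ let $C_w(e)$ be the maximum of $w(C)=\sum_{f\in E(C)}w(f)$ over all cycles $C$ of $K_r$ containing $e$, and set $\phi(e)=w(e)/C_w(e)$. If $\sum_{e\in E(K_r)}\frac{w(e)}{C_w(e)}=\frac{r-1}{2}$, then there exists $a:V(K_r)\to\mathbb{R}$ such that $\phi(uv)=\frac{a(u)+a(v)}{2}$ for all edges $uv$. *)

theory Defs
  imports Complex_Main
begin

definition Kedges :: "nat \<Rightarrow> nat set set" where
  "Kedges r = {{u, v} | u v. u < r \<and> v < r \<and> u \<noteq> v}"

text \<open>A cycle of K_r is given by a list of at least 3 distinct vertices
  (consecutive vertices adjacent, last adjacent to first).\<close>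
definition is_cycle :: "nat \<Rightarrow> nat list \<Rightarrow> bool" where
  "is_cycle r xs \<longleftrightarrow> length xs \<ge> 3 \<and> distinct xs \<and> set xs \<subseteq> {0..<r}"

definition cycle_edges :: "nat list \<Rightarrow> nat set set" where
  "cycle_edges xs = {{xs ! i, xs ! ((i + 1) mod length xs)} | i. i < length xs}"

definition cycle_weight :: "(nat set \<Rightarrow> real) \<Rightarrow> nat list \<Rightarrow> real" where
  "cycle_weight w xs = (\<Sum>f\<in>cycle_edges xs. w f)"

definition Cw :: "nat \<Rightarrow> (nat set \<Rightarrow> real) \<Rightarrow> nat set \<Rightarrow> real" where
  "Cw r w e = Max {cycle_weight w xs | xs. is_cycle r xs \<and> e \<in> cycle_edges xs}"

end

theory Submission
  imports Defs "HOL-Combinatorics.Permutations"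
begin

lemma edge_inj:
  assumes "distinct xs" "length xs \<ge> 3"
  shows "inj_on (\<lambda>i. {xs ! i, xs ! ((i + 1) mod length xs)}) {..<length xs}"
proof (rule inj_onI)
  fix i j assume i: "i \<in> {..<length xs}" and j: "j \<in> {..<length xs}"
    and eq: "{xs ! i, xs ! ((i + 1) mod length xs)} = {xs ! j, xs ! ((j + 1) mod length xs)}"
  let ?n = "length xs"
  have ni: "(i+1) mod ?n < ?n" "(j+1) mod ?n < ?n" proof - have "?n > 0" using assms(2) by linarith then show "(i+1) mod ?n < ?n" "(j+1) mod ?n < ?n" by simp_all qed
  have inj: "\<And>a b. a < ?n \<Longrightarrow> b < ?n \<Longrightarrow> xs ! a = xs ! b \<Longrightarrow> a = b"
    using assms(1) nth_eq_iff_index_eq by blast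
  from eq have "(xs ! i = xs ! j \<and> xs ! ((i + 1) mod ?n) = xs ! ((j + 1) mod ?n)) \<or>
     (xs ! i = xs ! ((j + 1) mod ?n) \<and> xs ! ((i + 1) mod ?n) = xs ! j)"
    by (auto simp: doubleton_eq_iff)
  then show "i = j"
  proof
    assume "xs ! i = xs ! j \<and> xs ! ((i + 1) mod ?n) = xs ! ((j + 1) mod ?n)"
    then show ?thesis using inj i j by auto
  next
    assume h: "xs ! i = xs ! ((j + 1) mod ?n) \<and> xs ! ((i + 1) mod ?n) = xs ! j"
    then have a: "i = (j+1) mod ?n" and b: "(i+1) mod ?n = j" using inj i j ni by auto
    show ?thesis
    proof (cases "j + 1 < ?n")
      case True
      then have "i = j + 1" using a by simp
      then have c: "(j + 2) mod ?n = j" using b by simp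
      show ?thesis
      proof (cases "j + 2 < ?n")
        case True then show ?thesis using c by simp
      next
        case False
        then have "j + 2 = ?n" using \<open>j + 1 < ?n\<close> by simp
        then show ?thesis using c assms(2) by simp
      qed
    next
      case False
      then have "j + 1 = ?n" using j by auto
      then have "i = 0" using a by simp
      then show ?thesis using b assms(2) \<open>j + 1 = ?n\<close> by simp
    qed
  qed
qed

lemma cedges_img: "cycle_edges xs = (\<lambda>i. {xs ! i, xs ! ((i + 1) mod length xs)}) ` {..<length xs}"
  unfolding cycle_edges_def by auto

lemma cw_list:
  assumes "distinct xs" "length xs \<ge> 3"
  shows "cycle_weight w xs = (\<Sum>i<length xs. w {xs ! i, xs ! ((i + 1) mod length xs)})"
  unfolding cycle_weight_def cedges_img
  by (subst sum.reindex[OF edge_inj[OF assms]]) simp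

lemma finite_cycles: "finite {xs. is_cycle r xs}"
proof -
  have "{xs. is_cycle r xs} \<subseteq> {xs. set xs \<subseteq> {0..<r} \<and> length xs \<le> r}"
  proof
    fix xs assume "xs \<in> {xs. is_cycle r xs}"
    then have d: "distinct xs" and s: "set xs \<subseteq> {0..<r}" by (auto simp: is_cycle_def)
    have "length xs = card (set xs)" using d by (simp add: distinct_card)
    also have "\<dots> \<le> card {0..<r}" using s by (intro card_mono) auto
    finally show "xs \<in> {xs. set xs \<subseteq> {0..<r} \<and> length xs \<le> r}" using s by simp
  qed
  then show ?thesis using finite_lists_length_le[of "{0..<r}" r] finite_subset by blast
qed

lemma cw_ge:
  assumes "is_cycle r xs" "e \<in> cycle_edges xs"
  shows "cycle_weight w xs \<le> Cw r w e"
  unfolding Cw_def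
proof (rule Max_ge)
  have "{cycle_weight w xs |xs. is_cycle r xs \<and> e \<in> cycle_edges xs} \<subseteq> cycle_weight w ` {xs. is_cycle r xs}"
    by auto
  then show "finite {cycle_weight w xs |xs. is_cycle r xs \<and> e \<in> cycle_edges xs}"
    using finite_cycles finite_subset by blast
  show "cycle_weight w xs \<in> {cycle_weight w xs |xs. is_cycle r xs \<and> e \<in> cycle_edges xs}"
    using assms by blast
qed

lemma edge_K:
  assumes "is_cycle r xs" "i < length xs"
  shows "{xs ! i, xs ! ((i + 1) mod length xs)} \<in> Kedges r"
proof -
  have d: "distinct xs" and s: "set xs \<subseteq> {0..<r}" and l: "length xs \<ge> 3" using assms by (auto simp: is_cycle_def)
  have "length xs > 0" using assms(2) by linarith
  then have j: "(i + 1) mod length xs < length xs" by simp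
  have ne: "i \<noteq> (i + 1) mod length xs"
  proof (cases "i + 1 < length xs")
    case True then show ?thesis by simp
  next
    case False then have "i + 1 = length xs" using assms(2) by simp
    then show ?thesis using l by simp
  qed
  have "xs ! i \<noteq> xs ! ((i + 1) mod length xs)" using d ne j assms(2) nth_eq_iff_index_eq by blast
  moreover have "xs ! i < r" "xs ! ((i + 1) mod length xs) < r" using s j assms(2) nth_mem by fastforce+
  ultimately show ?thesis unfolding Kedges_def by blast
qed

definition Sl :: "nat \<Rightarrow> (nat set \<Rightarrow> real) \<Rightarrow> nat list \<Rightarrow> real" where
  "Sl r w xs = (\<Sum>i<length xs. w {xs ! i, xs ! ((i + 1) mod length xs)} / Cw r w {xs ! i, xs ! ((i + 1) mod length xs)})"

lemma S_le:
  assumes cyc: "is_cycle r xs" and pos: "\<And>e. e \<in> Kedges r \<Longrightarrow> w e > 0"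
  shows "Sl r w xs \<le> 1"
    and "Sl r w xs = 1 \<Longrightarrow> i < length xs \<Longrightarrow> Cw r w {xs ! i, xs ! ((i + 1) mod length xs)} = cycle_weight w xs"
proof -
  define n where "n = length xs"
  define e where "e = (\<lambda>i. {xs ! i, xs ! ((i + 1) mod n)})"
  have d: "distinct xs" and l: "n \<ge> 3" using cyc by (auto simp: is_cycle_def n_def)
  define W where "W = cycle_weight w xs"
  have W: "W = (\<Sum>i<n. w (e i))" unfolding W_def e_def n_def using cw_list[OF d] l n_def by simp
  have we: "\<And>i. i < n \<Longrightarrow> w (e i) > 0" unfolding e_def n_def using edge_K[OF cyc] pos by blast
  have Wpos: "W > 0" unfolding W using l we by (intro sum_pos) (auto simp: lessThan_empty_iff)
  have ein: "\<And>i. i < n \<Longrightarrow> e i \<in> cycle_edges xs" unfolding e_def n_def cycle_edges_def by blast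
  have C: "\<And>i. i < n \<Longrightarrow> W \<le> Cw r w (e i)" unfolding W_def using cw_ge[OF cyc ein] by blast
  have le: "\<And>i. i < n \<Longrightarrow> w (e i) / Cw r w (e i) \<le> w (e i) / W"
  proof -
    fix i assume i: "i < n"
    have "Cw r w (e i) > 0" using C[OF i] Wpos by linarith
    then show "w (e i) / Cw r w (e i) \<le> w (e i) / W"
      using C[OF i] we[OF i] Wpos by (intro divide_left_mono) auto
  qed
  have sumW: "(\<Sum>i<n. w (e i) / W) = 1" using Wpos W by (simp add: sum_divide_distrib[symmetric])
  have SS: "Sl r w xs = (\<Sum>i<n. w (e i) / Cw r w (e i))" unfolding Sl_def e_def n_def by simp
  show "Sl r w xs \<le> 1" unfolding SS sumW[symmetric] using le by (intro sum_mono) auto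
  assume "Sl r w xs = 1" and i: "i < length xs"
  then have "(\<Sum>i<n. w (e i) / W - w (e i) / Cw r w (e i)) = 0"
    using SS sumW by (simp add: sum_subtractf)
  then have "\<forall>i\<in>{..<n}. w (e i) / W - w (e i) / Cw r w (e i) = 0"
    using le by (subst sum_nonneg_eq_0_iff[symmetric]) auto
  then have "w (e i) / W = w (e i) / Cw r w (e i)" using i n_def by auto
  then have "Cw r w (e i) = W" using we[of i] i n_def Wpos C[of i] by (auto simp: field_simps)
  then show "Cw r w {xs ! i, xs ! ((i + 1) mod length xs)} = cycle_weight w xs"
    unfolding e_def n_def W_def .
qed


lemma perm_exists:
  assumes "i \<in> A" "j \<in> A" "k \<in> A" "l \<in> A" "i \<noteq> j" "k \<noteq> l"
  shows "\<exists>p. p permutes A \<and> p k = i \<and> p l = j"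
proof -
  define q where "q = transpose k i"
  define p where "p = transpose (q l) j \<circ> q"
  have q: "q permutes A" unfolding q_def by (rule permutes_swap_id[OF assms(3) assms(1)])
  have ql: "q l \<in> A" using permutes_in_image[OF q] assms(4) by simp
  have p: "p permutes A" unfolding p_def by (rule permutes_compose[OF q permutes_swap_id[OF ql assms(2)]])
  have qk: "q k = i" unfolding q_def by simp
  have qli: "q l \<noteq> i"
  proof (cases "l = i")
    case True then show ?thesis unfolding q_def using assms(6) by simp
  next
    case False then show ?thesis unfolding q_def using assms(6) by simp
  qed
  have "p k = i" unfolding p_def using qk qli assms(5) by simp
  moreover have "p l = j" unfolding p_def by simp
  ultimately have "p k = i \<and> p l = j" by blast
  then show ?thesis using p by blast
qed

lemma T_const:
  assumes "i \<in> A" "j \<in> A" "k \<in> A" "l \<in> A" "i \<noteq> j" "k \<noteq> l"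
  shows "(\<Sum>\<sigma>\<in>{p. p permutes A}. g (\<sigma> i) (\<sigma> j)) = (\<Sum>\<sigma>\<in>{p. p permutes A}. g (\<sigma> k) (\<sigma> l))"
proof -
  obtain p where p: "p permutes A" "p k = i" "p l = j" using perm_exists[OF assms] by blast
  have "(\<Sum>\<sigma>\<in>{p. p permutes A}. g (\<sigma> k) (\<sigma> l)) = (\<Sum>\<sigma>\<in>{p. p permutes A}. g ((\<sigma> \<circ> p) k) ((\<sigma> \<circ> p) l))"
    by (rule sum_permutations_compose_right[OF p(1)])
  also have "\<dots> = (\<Sum>\<sigma>\<in>{p. p permutes A}. g (\<sigma> i) (\<sigma> j))" using p by simp
  finally show ?thesis by simp
qed

lemma sum_pairs:
  assumes "finite A"
  shows "(\<Sum>\<sigma>\<in>{p. p permutes A}. \<Sum>i\<in>A. \<Sum>j\<in>A-{i}. g (\<sigma> i) (\<sigma> j))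
     = real (card {p. p permutes A}) * (\<Sum>u\<in>A. \<Sum>v\<in>A-{u}. g u v)"
proof -
  have "\<And>\<sigma>. \<sigma> permutes A \<Longrightarrow> (\<Sum>i\<in>A. \<Sum>j\<in>A-{i}. g (\<sigma> i) (\<sigma> j)) = (\<Sum>u\<in>A. \<Sum>v\<in>A-{u}. g u v)"
  proof -
    fix \<sigma> assume s: "\<sigma> permutes A"
    have inj: "inj \<sigma>" using s permutes_inj by blast
    have "(\<Sum>i\<in>A. \<Sum>j\<in>A-{i}. g (\<sigma> i) (\<sigma> j)) = (\<Sum>i\<in>A. \<Sum>v\<in>A-{\<sigma> i}. g (\<sigma> i) v)"
    proof (rule sum.cong[OF refl])
      fix i assume "i \<in> A"
      have im: "\<sigma> ` (A - {i}) = A - {\<sigma> i}" using s inj by (simp add: image_set_diff permutes_image)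
      show "(\<Sum>j\<in>A-{i}. g (\<sigma> i) (\<sigma> j)) = (\<Sum>v\<in>A-{\<sigma> i}. g (\<sigma> i) v)"
        unfolding im[symmetric] by (subst sum.reindex) (auto intro: inj_on_subset[OF inj])
    qed
    also have "\<dots> = (\<Sum>u\<in>A. \<Sum>v\<in>A-{u}. g u v)"
      using sum.reindex[of \<sigma> A "\<lambda>u. \<Sum>v\<in>A-{u}. g u v"] inj s
      by (simp add: permutes_image inj_on_subset)
    finally show "(\<Sum>i\<in>A. \<Sum>j\<in>A-{i}. g (\<sigma> i) (\<sigma> j)) = (\<Sum>u\<in>A. \<Sum>v\<in>A-{u}. g u v)" .
  qed
  then show ?thesis by simp
qed

lemma minmax2: "u < v \<Longrightarrow> Min {u, v} = (u::nat) \<and> Max {u, v} = v"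
  by (auto simp: min_def max_def)

lemma pairs_edges:
  "(\<Sum>u\<in>{0..<r}. \<Sum>v\<in>{0..<r}-{u}. f {u, v}) = 2 * (\<Sum>e\<in>Kedges r. f e :: real)"
proof -
  define A where "A = {0..<r}"
  define D1 where "D1 = {(u, v). u < v \<and> v < r}"
  define D2 where "D2 = {(u, v). v < u \<and> u < r}"
  have fin1: "finite D1" unfolding D1_def by (rule finite_subset[of _ "{0..<r} \<times> {0..<r}"]) auto
  have fin2: "finite D2" unfolding D2_def by (rule finite_subset[of _ "{0..<r} \<times> {0..<r}"]) auto
  have "(\<Sum>u\<in>A. \<Sum>v\<in>A-{u}. f {u, v}) = (\<Sum>(u, v)\<in>Sigma A (\<lambda>u. A - {u}). f {u, v})"
    unfolding A_def by (rule sum.Sigma) auto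
  also have "Sigma A (\<lambda>u. A - {u}) = D1 \<union> D2" unfolding A_def D1_def D2_def by auto
  also have "(\<Sum>(u, v)\<in>D1 \<union> D2. f {u, v}) = (\<Sum>(u, v)\<in>D1. f {u, v}) + (\<Sum>(u, v)\<in>D2. f {u, v})"
    by (rule sum.union_disjoint[OF fin1 fin2]) (auto simp: D1_def D2_def)
  also have "(\<Sum>(u, v)\<in>D2. f {u, v}) = (\<Sum>(u, v)\<in>D1. f {u, v})"
    by (rule sum.reindex_bij_witness[of _ "\<lambda>(u,v). (v,u)" "\<lambda>(u,v). (v,u)"])
       (auto simp: D1_def D2_def insert_commute)
  also have "(\<Sum>(u, v)\<in>D1. f {u, v}) = (\<Sum>e\<in>Kedges r. f e)"
  proof (rule sum.reindex_bij_witness[of _ "\<lambda>e. (Min e, Max e)" "\<lambda>(u,v). {u, v}"])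
    fix a assume "a \<in> D1"
    then obtain u v where a: "a = (u, v)" "u < v" "v < r" unfolding D1_def by auto
    then show "(Min (case a of (u, v) \<Rightarrow> {u, v}), Max (case a of (u, v) \<Rightarrow> {u, v})) = a"
      using minmax2 by simp
    have "{u, v} \<in> Kedges r" using a unfolding Kedges_def by (intro CollectI exI[of _ u] exI[of _ v]) auto
    then show "(case a of (u, v) \<Rightarrow> {u, v}) \<in> Kedges r" using a by simp
    show "f (case a of (u, v) \<Rightarrow> {u, v}) = (case a of (u, v) \<Rightarrow> f {u, v})" using a by simp
  next
    fix e assume "e \<in> Kedges r"
    then obtain u v where e: "e = {u, v}" "u < r" "v < r" "u \<noteq> v" unfolding Kedges_def by auto
    have "(case (Min e, Max e) of (u, v) \<Rightarrow> {u, v}) = e \<and> (Min e, Max e) \<in> D1"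
    proof (cases "u < v")
      case True then show ?thesis using e minmax2[of u v] unfolding D1_def by simp
    next
      case False then have "v < u" using e by simp
      then show ?thesis using e minmax2[of v u] unfolding D1_def by (simp add: insert_commute)
    qed
    then show "(case (Min e, Max e) of (u, v) \<Rightarrow> {u, v}) = e" "(Min e, Max e) \<in> D1" by auto
  qed
  finally show ?thesis unfolding A_def by simp
qed


lemma perm_cycle:
  assumes s: "\<sigma> permutes {0..<r}" and r: "3 \<le> r"
  shows "is_cycle r (map \<sigma> [0..<r])"
    and "Sl r w (map \<sigma> [0..<r]) = (\<Sum>i<r. w {\<sigma> i, \<sigma> ((i + 1) mod r)} / Cw r w {\<sigma> i, \<sigma> ((i + 1) mod r)})"
proof -
  have "inj_on \<sigma> {0..<r}" using permutes_inj_on[OF s] .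
  then have "distinct (map \<sigma> [0..<r])" by (simp add: distinct_map)
  moreover have "set (map \<sigma> [0..<r]) = {0..<r}" using permutes_image[OF s] by simp
  ultimately show "is_cycle r (map \<sigma> [0..<r])" using r unfolding is_cycle_def by simp
  have "r > 0" using r by simp
  then show "Sl r w (map \<sigma> [0..<r]) = (\<Sum>i<r. w {\<sigma> i, \<sigma> ((i + 1) mod r)} / Cw r w {\<sigma> i, \<sigma> ((i + 1) mod r)})"
    unfolding Sl_def by (intro sum.cong) auto
qed

lemma list_perm:
  assumes d: "distinct xs" and s: "set xs = {0..<r}"
  shows "\<exists>\<sigma>. \<sigma> permutes {0..<r} \<and> map \<sigma> [0..<r] = xs"
proof -
  have l: "length xs = r" using distinct_card[OF d] s by simp
  define \<sigma> where "\<sigma> = (\<lambda>i. if i < r then xs ! i else i)"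
  have b: "bij_betw ((!) xs) {..<length xs} (set xs)" by (rule bij_betw_nth[OF d refl refl])
  have "bij_betw \<sigma> {0..<r} {0..<r}"
  proof -
    have "bij_betw \<sigma> {..<r} {0..<r}" using b l s
      by (subst bij_betw_cong[of _ _ "(!) xs"]) (auto simp: \<sigma>_def)
    then show ?thesis by (simp add: lessThan_atLeast0)
  qed
  then have "\<sigma> permutes {0..<r}" by (rule bij_imp_permutes) (auto simp: \<sigma>_def)
  moreover have "map \<sigma> [0..<r] = xs" using l by (intro nth_equalityI) (auto simp: \<sigma>_def)
  ultimately show ?thesis by blast
qed

lemma ham_exists:
  assumes "distinct p" "set p \<subseteq> {0..<(r::nat)}"
  shows "\<exists>rest. distinct (p @ rest) \<and> set (p @ rest) = {0..<r}"
proof -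
  define rest where "rest = sorted_list_of_set ({0..<r} - set p)"
  have "distinct (p @ rest) \<and> set (p @ rest) = {0..<r}" using assms unfolding rest_def by auto
  then show ?thesis by blast
qed

lemma all_one:
  fixes r :: nat and w :: "nat set \<Rightarrow> real"
  assumes r: "r \<ge> 4"
    and pos: "\<And>e. e \<in> Kedges r \<Longrightarrow> w e > 0"
    and sum: "(\<Sum>e\<in>Kedges r. w e / Cw r w e) = (real r - 1) / 2"
    and s: "\<sigma> permutes {0..<r}"
  shows "Sl r w (map \<sigma> [0..<r]) = 1"
proof -
  define A where "A = {0..<r}"
  define P where "P = {p. p permutes A}"
  define \<psi> where "\<psi> = (\<lambda>u v. w {u, v} / Cw r w {u, v})"
  define T where "T = (\<lambda>i j. \<Sum>\<sigma>\<in>P. \<psi> (\<sigma> i) (\<sigma> j))"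
  have finP: "finite P" unfolding P_def A_def by (rule finite_permutations) simp
  have cardP: "card P = fact r" unfolding P_def A_def by (rule card_permutations) auto
  have r3: "3 \<le> r" using r by simp
  have Sl_eq: "\<And>\<sigma>. \<sigma> \<in> P \<Longrightarrow> Sl r w (map \<sigma> [0..<r]) = (\<Sum>i<r. \<psi> (\<sigma> i) (\<sigma> ((i + 1) mod r)))"
    unfolding P_def A_def \<psi>_def using perm_cycle(2)[OF _ r3] by blast
  have Sl_le: "\<And>\<sigma>. \<sigma> \<in> P \<Longrightarrow> Sl r w (map \<sigma> [0..<r]) \<le> 1"
    unfolding P_def A_def using perm_cycle(1)[OF _ r3] S_le(1) pos by blast
  have T01: "\<And>i j. i \<in> A \<Longrightarrow> j \<in> A \<Longrightarrow> i \<noteq> j \<Longrightarrow> T i j = T 0 1"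
    unfolding T_def P_def by (rule T_const) (use r in \<open>auto simp: A_def\<close>)
  have "(\<Sum>\<sigma>\<in>P. Sl r w (map \<sigma> [0..<r])) = (\<Sum>\<sigma>\<in>P. \<Sum>i<r. \<psi> (\<sigma> i) (\<sigma> ((i + 1) mod r)))"
    using Sl_eq by (rule sum.cong[OF refl])
  also have "\<dots> = (\<Sum>i<r. T i ((i + 1) mod r))" unfolding T_def by (rule sum.swap)
  also have "\<dots> = (\<Sum>i<r. T 0 1)"
  proof (rule sum.cong[OF refl])
    fix i assume i: "i \<in> {..<r}"
    have ne: "i \<noteq> (i + 1) mod r"
    proof (cases "i + 1 < r")
      case True then show ?thesis by simp
    next
      case False then have "i + 1 = r" using i by simp
      then show ?thesis using r by simp
    qed
    have "(i + 1) mod r < r" using r by simp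
    then show "T i ((i + 1) mod r) = T 0 1" using T01 ne i unfolding A_def by simp
  qed
  finally have S1: "(\<Sum>\<sigma>\<in>P. Sl r w (map \<sigma> [0..<r])) = real r * T 0 1" by simp
  have "(\<Sum>\<sigma>\<in>P. \<Sum>i\<in>A. \<Sum>j\<in>A-{i}. \<psi> (\<sigma> i) (\<sigma> j)) = (\<Sum>i\<in>A. \<Sum>j\<in>A-{i}. T i j)"
    unfolding T_def by (simp add: sum.swap[of _ P])
  also have "\<dots> = (\<Sum>i\<in>A. \<Sum>j\<in>A-{i}. T 0 1)"
    using T01 by (intro sum.cong refl) auto
  also have "\<dots> = real r * (real r - 1) * T 0 1"
  proof -
    have "\<And>i. i \<in> A \<Longrightarrow> card (A - {i}) = r - 1" unfolding A_def by simp
    then have "(\<Sum>i\<in>A. \<Sum>j\<in>A-{i}. T 0 1) = (\<Sum>i\<in>A. real (r - 1) * T 0 1)" by simp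
    also have "\<dots> = real r * (real r - 1) * T 0 1" using r unfolding A_def by (simp add: of_nat_diff)
    finally show ?thesis .
  qed
  finally have S2: "(\<Sum>\<sigma>\<in>P. \<Sum>i\<in>A. \<Sum>j\<in>A-{i}. \<psi> (\<sigma> i) (\<sigma> j)) = real r * (real r - 1) * T 0 1" .
  have "(\<Sum>\<sigma>\<in>P. \<Sum>i\<in>A. \<Sum>j\<in>A-{i}. \<psi> (\<sigma> i) (\<sigma> j)) = real (card P) * (\<Sum>u\<in>A. \<Sum>v\<in>A-{u}. \<psi> u v)"
    unfolding P_def by (rule sum_pairs) (simp add: A_def)
  also have "(\<Sum>u\<in>A. \<Sum>v\<in>A-{u}. \<psi> u v) = 2 * (\<Sum>e\<in>Kedges r. w e / Cw r w e)"
    unfolding A_def \<psi>_def by (rule pairs_edges[where f = "\<lambda>e. w e / Cw r w e"])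
  also have "\<dots> = real r - 1" using sum by simp
  finally have "real r * (real r - 1) * T 0 1 = fact r * (real r - 1)" using S2 cardP by simp
  then have "real r * T 0 1 = fact r" using r by simp
  then have tot: "(\<Sum>\<sigma>\<in>P. 1 - Sl r w (map \<sigma> [0..<r])) = 0"
    using S1 cardP by (simp add: sum_subtractf)
  have "\<forall>\<sigma>\<in>P. 1 - Sl r w (map \<sigma> [0..<r]) = 0"
    using sum_nonneg_eq_0_iff[OF finP, of "\<lambda>\<sigma>. 1 - Sl r w (map \<sigma> [0..<r])"] tot Sl_le by simp
  then show ?thesis using s unfolding P_def A_def by simp
qed


lemma additive:
  fixes g :: "nat set \<Rightarrow> real"
  assumes r: "r \<ge> 4"
    and Q: "\<And>a b c d. a < r \<Longrightarrow> b < r \<Longrightarrow> c < r \<Longrightarrow> d < r \<Longrightarrow> distinct [a, b, c, d] \<Longrightarrow>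
              g {a, b} + g {c, d} = g {a, c} + g {b, d}"
  shows "\<exists>h. \<forall>u v. u < r \<longrightarrow> v < r \<longrightarrow> u \<noteq> v \<longrightarrow> g {u, v} = h u + h v"
proof -
  define h where "h = (\<lambda>u. if u = 0 then (g {0, 1} + g {0, 2} - g {1, 2}) / 2
     else if u = 1 then (g {0, 1} + g {1, 2} - g {0, 2}) / 2
     else (g {u, 0} + g {u, 1} - g {0, 1}) / 2)"
  have main: "g {u, v} = h u + h v" if uv: "u < v" "v < r" for u v
  proof -
    consider "u = 0" "v = 1" | "u = 0" "v = 2" | "u = 0" "v \<ge> 3" | "u = 1" "v = 2" | "u = 1" "v \<ge> 3"
      | "u \<ge> 2" using uv by linarith
    then show ?thesis
    proof cases
      case 1 then show ?thesis by (simp add: h_def field_simps)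
    next
      case 2 then show ?thesis by (simp add: h_def insert_commute field_simps)
    next
      case 3
      have "g {0, 2} + g {v, 1} = g {0, v} + g {2, 1}" using Q[of 0 2 v 1] 3 uv r by simp
      then show ?thesis using 3 by (simp add: h_def insert_commute field_simps)
    next
      case 4 then show ?thesis by (simp add: h_def insert_commute field_simps)
    next
      case 5
      have "g {1, 2} + g {v, 0} = g {1, v} + g {2, 0}" using Q[of 1 2 v 0] 5 uv r by simp
      then show ?thesis using 5 by (simp add: h_def insert_commute field_simps)
    next
      case 6
      have "g {u, 0} + g {v, 1} = g {u, v} + g {0, 1}" using Q[of u 0 v 1] 6 uv r by simp
      moreover have "g {u, 1} + g {v, 0} = g {u, v} + g {1, 0}" using Q[of u 1 v 0] 6 uv r by simp
      ultimately show ?thesis using 6 uv by (simp add: h_def insert_commute field_simps)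
    qed
  qed
  have "\<forall>u v. u < r \<longrightarrow> v < r \<longrightarrow> u \<noteq> v \<longrightarrow> g {u, v} = h u + h v"
  proof (intro allI impI)
    fix u v assume "u < r" "v < r" "u \<noteq> v"
    then show "g {u, v} = h u + h v"
    proof (cases "u < v")
      case True then show ?thesis using main \<open>v < r\<close> by simp
    next
      case False then have "v < u" using \<open>u \<noteq> v\<close> by simp
      then show ?thesis using main[of v u] \<open>u < r\<close> by (simp add: insert_commute)
    qed
  qed
  then show ?thesis by blast
qed


context
  fixes r :: nat and w :: "nat set \<Rightarrow> real"
  assumes r: "r \<ge> 4"
    and pos: "\<And>e. e \<in> Kedges r \<Longrightarrow> w e > 0"
    and sm: "(\<Sum>e\<in>Kedges r. w e / Cw r w e) = (real r - 1) / 2"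
begin

lemma ham_C:
  assumes d: "distinct xs" and s: "set xs = {0..<r}" and i: "i < r"
  shows "Cw r w {xs ! i, xs ! ((i + 1) mod r)} = cycle_weight w xs"
proof -
  have l: "length xs = r" using distinct_card[OF d] s by simp
  obtain \<sigma> where \<sigma>: "\<sigma> permutes {0..<r}" "map \<sigma> [0..<r] = xs" using list_perm[OF d s] by blast
  have "Sl r w xs = 1" using all_one[OF r pos sm \<sigma>(1)] \<sigma>(2) by simp
  moreover have "is_cycle r xs" using d s l r unfolding is_cycle_def by simp
  ultimately show ?thesis using S_le(2)[of r xs w i] pos i l by simp
qed

lemma C_adj:
  assumes "a < r" "b < r" "c < r" "distinct [a, b, c]"
  shows "Cw r w {a, b} = Cw r w {b, c}"
proof -
  obtain rest where h: "distinct ([a, b, c] @ rest)" "set ([a, b, c] @ rest) = {0..<r}"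
    using ham_exists[of "[a, b, c]" r] assms by auto
  have "Cw r w {([a, b, c] @ rest) ! 0, ([a, b, c] @ rest) ! ((0 + 1) mod r)} = cycle_weight w ([a, b, c] @ rest)"
    using ham_C[OF h, of 0] r by simp
  moreover have "Cw r w {([a, b, c] @ rest) ! 1, ([a, b, c] @ rest) ! ((1 + 1) mod r)} = cycle_weight w ([a, b, c] @ rest)"
    using ham_C[OF h, of 1] r by simp
  ultimately show ?thesis using r by simp
qed

lemma C_const:
  assumes "u < r" "v < r" "u \<noteq> v"
  shows "Cw r w {u, v} = Cw r w {0, 1}"
proof -
  have r01: "0 < r" "1 < r" using r by auto
  have adj: "\<And>a b c. a < r \<Longrightarrow> b < r \<Longrightarrow> c < r \<Longrightarrow> a \<noteq> b \<Longrightarrow> b \<noteq> c \<Longrightarrow> a \<noteq> c \<Longrightarrow>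
     Cw r w {a, b} = Cw r w {b, c}" by (rule C_adj) auto
  have sym: "\<And>x y. Cw r w {x, y} = Cw r w {y, x}" by (simp add: insert_commute)
  show ?thesis
  proof (cases "u = 0")
    case True
    show ?thesis
    proof (cases "v = 1")
      case True then show ?thesis using \<open>u = 0\<close> by simp
    next
      case False
      have "Cw r w {v, 0} = Cw r w {0, 1}" using adj[of v 0 1] False assms r01 True by simp
      then show ?thesis using sym[of 0 v] True by simp
    qed
  next
    case u0: False
    show ?thesis
    proof (cases "u = 1")
      case True
      show ?thesis
      proof (cases "v = 0")
        case True then show ?thesis using \<open>u = 1\<close> sym[of 1 0] by simp
      next
        case False
        have "Cw r w {v, 1} = Cw r w {1, 0}" using adj[of v 1 0] False assms r01 True by simp
        then show ?thesis using sym[of 1 v] sym[of 1 0] True by simp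
      qed
    next
      case u1: False
      show ?thesis
      proof (cases "v = 0")
        case True then show ?thesis using adj[of u 0 1] u0 u1 assms r01 by simp
      next
        case v0: False
        show ?thesis
        proof (cases "v = 1")
          case True then show ?thesis using adj[of u 1 0] sym[of 1 0] u0 u1 assms r01 by simp
        next
          case False
          have "Cw r w {u, v} = Cw r w {v, 0}" using adj[of u v 0] u0 v0 assms r01 by simp
          also have "\<dots> = Cw r w {0, 1}" using adj[of v 0 1] v0 False assms r01 by simp
          finally show ?thesis .
        qed
      qed
    qed
  qed
qed

lemma ham_W:
  assumes d: "distinct xs" and s: "set xs = {0..<r}"
  shows "cycle_weight w xs = Cw r w {0, 1}"
proof -
  have l: "length xs = r" using distinct_card[OF d] s by simp
  have l0: "0 < length xs" "1 < length xs" using l r by auto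
  have "xs ! 0 \<in> set xs" "xs ! 1 \<in> set xs" using nth_mem[OF l0(1)] nth_mem[OF l0(2)] by auto
  then have x01: "xs ! 0 < r" "xs ! 1 < r" using s by auto
  have ne: "xs ! 0 \<noteq> xs ! 1" using nth_eq_iff_index_eq[OF d l0] by simp
  have "Cw r w {xs ! 0, xs ! ((0 + 1) mod r)} = cycle_weight w xs" using ham_C[OF d s, of 0] r by simp
  moreover have "(0 + 1) mod r = 1" using r by simp
  ultimately have "Cw r w {xs ! 0, xs ! 1} = cycle_weight w xs" by simp
  then show ?thesis using C_const[OF x01 ne] by simp
qed

lemma four_point:
  assumes "a < r" "b < r" "c < r" "d < r" "distinct [a, b, c, d]"
  shows "w {a, b} + w {c, d} = w {a, c} + w {b, d}"
proof -
  obtain rest where h: "distinct ([a, b, c, d] @ rest)" "set ([a, b, c, d] @ rest) = {0..<r}"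
    using ham_exists[of "[a, b, c, d]" r] assms by auto
  define xs where "xs = [a, b, c, d] @ rest"
  define ys where "ys = [a, c, b, d] @ rest"
  have dx: "distinct xs" "set xs = {0..<r}" using h xs_def by auto
  have dy: "distinct ys" "set ys = {0..<r}" using h unfolding ys_def by auto
  have lx: "length xs = r" using distinct_card[OF dx(1)] dx(2) by simp
  have ly: "length ys = r" using distinct_card[OF dy(1)] dy(2) by simp
  define F where "F = (\<lambda>zs i. w {zs ! i, zs ! ((i + 1) mod r)})"
  have cx: "cycle_weight w xs = (\<Sum>i<r. F xs i)" using cw_list[OF dx(1)] lx r unfolding F_def by simp
  have cy: "cycle_weight w ys = (\<Sum>i<r. F ys i)" using cw_list[OF dy(1)] ly r unfolding F_def by simp
  have eqW: "cycle_weight w xs = cycle_weight w ys" using ham_W[OF dx] ham_W[OF dy] by simp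
  have split: "\<And>zs. (\<Sum>i<r. F zs i) = (\<Sum>i<3. F zs i) + (\<Sum>i\<in>{3..<r}. F zs i)"
  proof -
    fix zs
    have "{..<r} = {..<3} \<union> {3..<r}" using r by auto
    then have "(\<Sum>i<r. F zs i) = sum (F zs) ({..<3} \<union> {3..<r})" by simp
    also have "\<dots> = (\<Sum>i<3. F zs i) + (\<Sum>i\<in>{3..<r}. F zs i)"
      by (rule sum.union_disjoint) auto
    finally show "(\<Sum>i<r. F zs i) = (\<Sum>i<3. F zs i) + (\<Sum>i\<in>{3..<r}. F zs i)" .
  qed
  have nth_eq: "xs ! j = ys ! j" if "j \<noteq> 1" "j \<noteq> 2" for j
  proof -
    have "j = 0 \<or> j = 3 \<or> j \<ge> 4" using that by arith
    then show ?thesis unfolding xs_def ys_def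
      by (auto simp: nth_append numeral_3_eq_3 numeral_2_eq_2)
  qed
  have tail: "(\<Sum>i\<in>{3..<r}. F xs i) = (\<Sum>i\<in>{3..<r}. F ys i)"
  proof (rule sum.cong[OF refl])
    fix i assume i: "i \<in> {3..<r}"
    have "(i + 1) mod r \<noteq> 1 \<and> (i + 1) mod r \<noteq> 2"
    proof (cases "i + 1 < r")
      case True then show ?thesis using i by simp
    next
      case False then have "i + 1 = r" using i by simp
      then show ?thesis by simp
    qed
    moreover have "i \<noteq> 1" "i \<noteq> 2" using i by auto
    ultimately show "F xs i = F ys i" unfolding F_def using nth_eq by simp
  qed
  have "r mod r = 0" "3 mod r = 3" "2 mod r = 2" "1 mod r = 1" using r by auto
  then have "(\<Sum>i<3. F xs i) = (\<Sum>i<3. F ys i)" using eqW cx cy split tail by simp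
  then have "w {a, b} + w {b, c} + w {c, d} = w {a, c} + w {c, b} + w {b, d}"
    using r unfolding F_def xs_def ys_def by (simp add: numeral_3_eq_3 numeral_2_eq_2)
  then show ?thesis by (simp add: insert_commute)
qed

lemma final:
  "\<exists>a :: nat \<Rightarrow> real. \<forall>u v. u < r \<longrightarrow> v < r \<longrightarrow> u \<noteq> v \<longrightarrow>
           w {u, v} / Cw r w {u, v} = (a u + a v) / 2"
proof -
  have Q: "\<And>a b c d. a < r \<Longrightarrow> b < r \<Longrightarrow> c < r \<Longrightarrow> d < r \<Longrightarrow> distinct [a, b, c, d] \<Longrightarrow>
              w {a, b} + w {c, d} = w {a, c} + w {b, d}" by (rule four_point)
  have ex: "\<exists>h. \<forall>u v. u < r \<longrightarrow> v < r \<longrightarrow> u \<noteq> v \<longrightarrow> w {u, v} = h u + h v"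
    by (rule additive[where g = w, OF r Q])
  then obtain h where h: "\<forall>u v. u < r \<longrightarrow> v < r \<longrightarrow> u \<noteq> v \<longrightarrow> w {u, v} = h u + h v"
    by blast
  define W where "W = Cw r w {0, 1}"
  have "\<forall>u v. u < r \<longrightarrow> v < r \<longrightarrow> u \<noteq> v \<longrightarrow>
           w {u, v} / Cw r w {u, v} = ((2 * h u / W) + (2 * h v / W)) / 2"
  proof (intro allI impI)
    fix u v assume uv: "u < r" "v < r" "u \<noteq> v"
    have e1: "w {u, v} = h u + h v" using h uv by blast
    have e2: "Cw r w {u, v} = W" using C_const[OF uv] unfolding W_def .
    have "w {u, v} / Cw r w {u, v} = (h u + h v) / W" unfolding e1 e2 ..
    also have "\<dots> = ((2 * h u / W) + (2 * h v / W)) / 2" by (simp add: add_divide_distrib)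
    finally show "w {u, v} / Cw r w {u, v} = ((2 * h u / W) + (2 * h v / W)) / 2" .
  qed
  then show ?thesis by (intro exI[where x = "\<lambda>u. 2 * h u / W"])
qed

end


theorem proposition3p7:
  fixes r :: nat and w :: "nat set \<Rightarrow> real"
  assumes "r \<ge> 4"
    and "\<And>e. e \<in> Kedges r \<Longrightarrow> w e > 0"
    and "(\<Sum>e\<in>Kedges r. w e / Cw r w e) = (real r - 1) / 2"
  shows "\<exists>a :: nat \<Rightarrow> real. \<forall>u v. u < r \<longrightarrow> v < r \<longrightarrow> u \<noteq> v \<longrightarrow>
           w {u, v} / Cw r w {u, v} = (a u + a v) / 2"
  using final[OF assms] .

end
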